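(* Let $n\ge 4$ and let $X$ be a real $2\times n$ matrix with $\Delta_{i,j}(X)>0$ for all $1\le i<j\le n$. Then for all integers $1\le j<k<l\le n-1$, $$D_k D_{l-j}\ \ge\ D_j D_{l-k}+D_l D_{k-j}.$$
   Context: $\Delta_{i,j}(X)$ is the determinant of the $2\times2$ submatrix of columns $i,j$ of $X$. Let $\sigma$ act on strictly increasing pairs $(i,j)$, $1\le i<j\le n$, by $\sigma(i,j)=(i+1,j+1)$ if $j<n$ and $\sigma(i,n)=(1,i+1)$. For $k\in\{1,\dots,n-1\}$, $D_k=\left(\prod_{m=0}^{n-1}\Delta_{\sigma^m(1,k+1)}(X)\right)^{1/n}$ (geometric mean over the orbit $O_k=\{\sigma^m(1,k+1)\}$). *)

theory Defs
  imports Complex_Main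
begin

text \<open>A real 2 x n matrix is represented as X :: nat => nat => real, with
  entry X r c for row r in {1,2} and column c in {1..n}.\<close>

definition Delta :: "(nat \<Rightarrow> nat \<Rightarrow> real) \<Rightarrow> nat \<times> nat \<Rightarrow> real" where
  "Delta X p = X 1 (fst p) * X 2 (snd p) - X 1 (snd p) * X 2 (fst p)"

definition sigma :: "nat \<Rightarrow> nat \<times> nat \<Rightarrow> nat \<times> nat" where
  "sigma n p = (if snd p < n then (fst p + 1, snd p + 1) else (1, fst p + 1))"

definition Dk :: "nat \<Rightarrow> (nat \<Rightarrow> nat \<Rightarrow> real) \<Rightarrow> nat \<Rightarrow> real" where
  "Dk n X k = root n (\<Prod>m<n. Delta X ((sigma n ^^ m) (1, k + 1)))"

end

theory Submission imports Defs "HOL-Analysis.Analysis" begin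

lemma geo_superadd:
  fixes b c :: "nat \<Rightarrow> real"
  assumes n: "n > 0" and b: "\<And>m. m < n \<Longrightarrow> b m > 0" and c: "\<And>m. m < n \<Longrightarrow> c m > 0"
  shows "root n (\<Prod>m<n. b m) + root n (\<Prod>m<n. c m) \<le> root n (\<Prod>m<n. b m + c m)"
proof -
  define S where "S = {..<n}"
  have fS: "finite S" "S \<noteq> {}" "card S = n" using n by (auto simp: S_def)
  have bc: "\<And>m. m \<in> S \<Longrightarrow> b m + c m > 0" using b c by (auto simp: S_def intro: add_pos_pos)
  have P: "(\<Prod>m\<in>S. b m + c m) > 0" using bc by (auto intro!: prod_pos)
  have Pb: "(\<Prod>m\<in>S. b m) > 0" using b by (auto simp: S_def intro!: prod_pos)
  have Pc: "(\<Prod>m\<in>S. c m) > 0" using c by (auto simp: S_def intro!: prod_pos)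
  have 1: "(\<Prod>m\<in>S. b m / (b m + c m)) powr (1 / card S) \<le> (\<Sum>m\<in>S. b m / (b m + c m) / card S)"
    using arith_geom_mean[OF fS(1,2), of "\<lambda>m. b m / (b m + c m)"] bc b by (force simp: S_def less_imp_le)
  have 2: "(\<Prod>m\<in>S. c m / (b m + c m)) powr (1 / card S) \<le> (\<Sum>m\<in>S. c m / (b m + c m) / card S)"
    using arith_geom_mean[OF fS(1,2), of "\<lambda>m. c m / (b m + c m)"] bc c by (force simp: S_def less_imp_le)
  have s: "(\<Sum>m\<in>S. b m / (b m + c m) / card S) + (\<Sum>m\<in>S. c m / (b m + c m) / card S) = 1"
  proof -
    have "(\<Sum>m\<in>S. b m / (b m + c m) / card S) + (\<Sum>m\<in>S. c m / (b m + c m) / card S)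
        = (\<Sum>m\<in>S. 1 / card S)"
      unfolding sum.distrib[symmetric]
    proof (rule sum.cong)
      fix x assume "x \<in> S"
      then have "b x / (b x + c x) + c x / (b x + c x) = 1" using bc[of x]
        by (simp add: add_divide_distrib[symmetric])
      then show "b x / (b x + c x) / card S + c x / (b x + c x) / card S = 1 / card S"
        by (metis add_divide_distrib)
    qed simp
    also have "\<dots> = 1" using fS n by simp
    finally show ?thesis .
  qed
  have e1: "(\<Prod>m\<in>S. b m / (b m + c m)) = (\<Prod>m\<in>S. b m) / (\<Prod>m\<in>S. b m + c m)"
    by (simp add: prod_dividef)
  have e2: "(\<Prod>m\<in>S. c m / (b m + c m)) = (\<Prod>m\<in>S. c m) / (\<Prod>m\<in>S. b m + c m)"
    by (simp add: prod_dividef)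
  have "(\<Prod>m\<in>S. b m) powr (1/n) / (\<Prod>m\<in>S. b m + c m) powr (1/n)
      + (\<Prod>m\<in>S. c m) powr (1/n) / (\<Prod>m\<in>S. b m + c m) powr (1/n) \<le> 1"
    using 1 2 s unfolding e1 e2 fS(3) using Pb Pc P by (simp add: powr_divide less_imp_le)
  then have "(\<Prod>m\<in>S. b m) powr (1/n) + (\<Prod>m\<in>S. c m) powr (1/n) \<le> (\<Prod>m\<in>S. b m + c m) powr (1/n)"
    using P by (simp add: add_divide_distrib[symmetric] divide_le_eq)
  then show ?thesis using Pb Pc P n by (simp add: S_def root_powr_inverse)
qed

definition Y :: "nat \<Rightarrow> (nat \<Rightarrow> nat \<Rightarrow> real) \<Rightarrow> nat \<Rightarrow> nat \<Rightarrow> real" where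
  "Y n X r a = (-1) ^ ((a - 1) div n) * X r ((a - 1) mod n + 1)"

definition Q :: "nat \<Rightarrow> (nat \<Rightarrow> nat \<Rightarrow> real) \<Rightarrow> nat \<Rightarrow> nat \<Rightarrow> real" where
  "Q n X a b = Y n X 1 a * Y n X 2 b - Y n X 1 b * Y n X 2 a"

lemma pluecker: "Q n X a c * Q n X b d = Q n X a b * Q n X c d + Q n X a d * Q n X b c"
  unfolding Q_def by algebra

lemma Y_per: assumes "a \<ge> 1" "n > 0" shows "Y n X r (a + n) = - Y n X r a"
proof -
  have e: "a + n - 1 = (a - 1) + n" using assms by simp
  have "(a + n - 1) div n = Suc ((a - 1) div n)" "(a + n - 1) mod n = (a - 1) mod n"
    unfolding e using assms by (simp_all add: le_div_geq le_mod_geq)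
  then show ?thesis by (simp add: Y_def)
qed

lemma Q_per: assumes "a \<ge> 1" "b \<ge> 1" "n > 0" shows "Q n X (a + n) (b + n) = Q n X a b"
  using assms by (simp add: Q_def Y_per)

lemma Y_low: assumes "1 \<le> a" "a \<le> n" shows "Y n X r a = X r a"
proof -
  have "(a - 1) div n = 0" "(a - 1) mod n = a - 1" using assms by auto
  then show ?thesis using assms by (simp add: Y_def)
qed

lemma Y_high: assumes "n < a" "a \<le> 2 * n" shows "Y n X r a = - X r (a - n)"
proof -
  have e: "a - 1 - n = a - n - 1" by simp
  have "(a - n - 1) div n = 0" "(a - n - 1) mod n = a - n - 1" using assms by auto
  then have "(a - 1) div n = 1" "(a - 1) mod n = a - n - 1"
    using assms le_div_geq[of n "a - 1"] le_mod_geq[of n "a - 1"] by (simp_all add: e)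
  moreover have "a - n - 1 + 1 = a - n" using assms by simp
  ultimately show ?thesis using assms by (simp add: Y_def)
qed

lemma Q_pos:
  assumes pos: "\<And>i j. 1 \<le> i \<Longrightarrow> i < j \<Longrightarrow> j \<le> n \<Longrightarrow> Delta X (i, j) > 0"
    and "1 \<le> a" "a < b" "b < a + n"
  shows "Q n X a b > 0"
proof -
  define q where "q = (a - 1) div n"
  define r where "r = (a - 1) mod n"
  define d where "d = b - a"
  have n: "n > 0" using assms by simp
  have rn: "r < n" using n by (simp add: r_def)
  have a1: "a - 1 = q * n + r" by (simp add: q_def r_def)
  have b1: "b - 1 = q * n + (r + d)" using assms a1 by (simp add: d_def)
  have dn: "0 < d" "d < n" using assms by (auto simp: d_def)
  have Ya: "Y n X s a = (-1) ^ q * X s (r + 1)" for s by (simp add: Y_def q_def r_def)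
  show ?thesis
  proof (cases "r + d < n")
    case True
    then have "(b - 1) div n = q" "(b - 1) mod n = r + d" unfolding b1 by auto
    then have Yb: "Y n X s b = (-1) ^ q * X s (r + d + 1)" for s by (simp add: Y_def)
    have "Delta X (r + 1, r + d + 1) > 0" using pos True dn by auto
    moreover have "Q n X a b = ((-1) ^ q) ^ 2 * Delta X (r + 1, r + d + 1)"
      unfolding Q_def Ya Yb Delta_def by (simp add: algebra_simps power2_eq_square)
    ultimately show ?thesis by simp
  next
    case False
    have b2: "b - 1 - n = q * n + (r + d - n)" using b1 False by simp
    have "r + d - n < n" using rn dn by simp
    then have "(b - 1 - n) div n = q" "(b - 1 - n) mod n = r + d - n" unfolding b2 by auto
    moreover have "n \<le> b - 1" using b1 False by simp
    ultimately have "(b - 1) div n = q + 1" "(b - 1) mod n = r + d - n"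
      using n le_div_geq[of n "b - 1"] le_mod_geq[of n "b - 1"] by simp_all
    then have Yb: "Y n X s b = - ((-1) ^ q * X s (r + d - n + 1))" for s by (simp add: Y_def)
    have "Delta X (r + d - n + 1, r + 1) > 0" using pos False dn rn by auto
    moreover have "Q n X a b = ((-1) ^ q) ^ 2 * Delta X (r + d - n + 1, r + 1)"
      unfolding Q_def Ya Yb Delta_def by (simp add: algebra_simps power2_eq_square)
    ultimately show ?thesis by simp
  qed
qed

lemma orbit:
  assumes "1 \<le> k" "k < n" "m < n"
  shows "(Defs.sigma n ^^ m) (1, k + 1) = (if m < n - k then (m + 1, m + 1 + k) else (m + k + 1 - n, m + 1))"
  using assms(3)
proof (induction m)
  case 0
  then show ?case using assms by simp
next
  case (Suc m)
  then have IH: "(Defs.sigma n ^^ m) (1, k + 1) = (if m < n - k then (m + 1, m + 1 + k) else (m + k + 1 - n, m + 1))"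
    by simp
  have S: "(Defs.sigma n ^^ Suc m) (1, k + 1) = Defs.sigma n (if m < n - k then (m + 1, m + 1 + k) else (m + k + 1 - n, m + 1))"
    using IH by simp
  show ?case
  proof (cases "Suc m < n - k")
    case True then show ?thesis unfolding S by (simp add: Defs.sigma_def)
  next
    case False
    show ?thesis
    proof (cases "m < n - k")
      case True
      then have "m = n - k - 1" using False by simp
      then show ?thesis unfolding S using True False assms by (simp add: Defs.sigma_def)
    next
      case F2: False
      then show ?thesis unfolding S using False Suc.prems assms by (simp add: Defs.sigma_def)
    qed
  qed
qed

lemma Delta_orbit:
  assumes "1 \<le> k" "k < n" "m < n"
  shows "Delta X ((Defs.sigma n ^^ m) (1, k + 1)) = Q n X (m + 1) (m + 1 + k)"
proof (cases "m < n - k")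
  case True
  have o: "(Defs.sigma n ^^ m) (1, k + 1) = (m + 1, m + 1 + k)" using orbit[OF assms] True by simp
  show ?thesis unfolding o using assms True by (simp add: Q_def Delta_def Y_low)
next
  case False
  have "m + 1 + k - n = m + k + 1 - n" by simp
  have o: "(Defs.sigma n ^^ m) (1, k + 1) = (m + k + 1 - n, m + 1)" using orbit[OF assms] False by simp
  show ?thesis unfolding o using assms False
    by (simp add: Q_def Delta_def Y_low Y_high algebra_simps)
qed

lemma prod_shift1:
  fixes f :: "nat \<Rightarrow> real"
  assumes "\<And>m. f (m + n) = f m" "\<And>m. f m \<noteq> 0"
  shows "(\<Prod>m<n. f (Suc m)) = (\<Prod>m<n. f m)"
proof -
  have "f 0 * (\<Prod>m<n. f (Suc m)) = (\<Prod>m<Suc n. f m)" by (rule prod.lessThan_Suc_shift[symmetric])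
  also have "\<dots> = (\<Prod>m<n. f m) * f n" by simp
  also have "f n = f 0" using assms(1)[of 0] by simp
  finally show ?thesis using assms(2)[of 0] by simp
qed

lemma prod_shift:
  fixes f :: "nat \<Rightarrow> real"
  assumes "\<And>m. f (m + n) = f m" "\<And>m. f m \<noteq> 0"
  shows "(\<Prod>m<n. f (m + c)) = (\<Prod>m<n. f m)"
proof (induction c)
  case 0 then show ?case by simp
next
  case (Suc c)
  have "(\<Prod>m<n. f (m + Suc c)) = (\<Prod>m<n. (\<lambda>i. f (i + c)) (Suc m))" by simp
  also have "\<dots> = (\<Prod>m<n. f (m + c))"
    by (rule prod_shift1) (use assms in \<open>simp_all add: add.assoc add.commute[of n]\<close>, metis add.assoc add.commute assms(1))
  finally show ?case using Suc by simp
qed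


lemma Dk_eq:
  assumes "1 \<le> k" "k < n"
  shows "Dk n X k = root n (\<Prod>m<n. Q n X (m + 1) (m + 1 + k))"
  unfolding Dk_def using Delta_orbit[OF assms] by (intro arg_cong[where f="root n"] prod.cong) auto

lemma P_shift:
  assumes pos: "\<And>i j. 1 \<le> i \<Longrightarrow> i < j \<Longrightarrow> j \<le> n \<Longrightarrow> Delta X (i, j) > 0"
    and "1 \<le> d" "d < n"
  shows "(\<Prod>m<n. Q n X (m + 1 + c) (m + 1 + c + d)) = (\<Prod>m<n. Q n X (m + 1) (m + 1 + d))"
proof -
  define f where "f m = Q n X (m + 1) (m + 1 + d)" for m
  have per: "f (m + n) = f m" for m
    using Q_per[of "m + 1" "m + 1 + d" n X] assms by (simp add: f_def add_ac)
  have nz: "f m \<noteq> 0" for m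
  proof -
    have "Q n X (m + 1) (m + 1 + d) > 0" by (rule Q_pos) (use pos assms in auto)
    then show ?thesis by (simp add: f_def)
  qed
  have "(\<Prod>m<n. f (m + c)) = (\<Prod>m<n. f m)" by (rule prod_shift[where f=f, OF per nz])
  then show ?thesis by (simp add: f_def add_ac)
qed

theorem mainTheorem9:
  fixes n :: nat and X :: "nat \<Rightarrow> nat \<Rightarrow> real"
  assumes "n \<ge> 4"
    and "\<And>i j. 1 \<le> i \<Longrightarrow> i < j \<Longrightarrow> j \<le> n \<Longrightarrow> Delta X (i, j) > 0"
    and "1 \<le> j" "j < k" "k < l" "l \<le> n - 1"
  shows "Dk n X k * Dk n X (l - j) \<ge> Dk n X j * Dk n X (l - k) + Dk n X l * Dk n X (k - j)"
proof -
  note pos = assms(2)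
  have n: "n > 0" using assms by simp
  define A where "A m = Q n X (m + 1) (m + 1 + k)" for m
  define B where "B m = Q n X (m + 1 + j) (m + 1 + l)" for m
  define C where "C m = Q n X (m + 1) (m + 1 + j)" for m
  define E where "E m = Q n X (m + 1 + k) (m + 1 + l)" for m
  define F where "F m = Q n X (m + 1) (m + 1 + l)" for m
  define G where "G m = Q n X (m + 1 + j) (m + 1 + k)" for m
  have qp: "\<And>a b. 1 \<le> a \<Longrightarrow> a < b \<Longrightarrow> b < a + n \<Longrightarrow> Q n X a b > 0"
    by (rule Q_pos) (use pos in auto)
  have Ak: "Dk n X k = root n (\<Prod>m<n. A m)" unfolding A_def using assms by (intro Dk_eq) auto
  have Bk: "Dk n X (l - j) = root n (\<Prod>m<n. B m)"
  proof -
    have "Dk n X (l - j) = root n (\<Prod>m<n. Q n X (m + 1) (m + 1 + (l - j)))"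
      using assms by (intro Dk_eq) auto
    also have "(\<Prod>m<n. Q n X (m + 1) (m + 1 + (l - j))) = (\<Prod>m<n. Q n X (m + 1 + j) (m + 1 + j + (l - j)))"
      using assms by (intro P_shift[symmetric]) auto
    also have "\<dots> = (\<Prod>m<n. B m)" using assms by (simp add: B_def)
    finally show ?thesis .
  qed
  have Ck: "Dk n X j = root n (\<Prod>m<n. C m)" unfolding C_def using assms by (intro Dk_eq) auto
  have Ek: "Dk n X (l - k) = root n (\<Prod>m<n. E m)"
  proof -
    have "Dk n X (l - k) = root n (\<Prod>m<n. Q n X (m + 1) (m + 1 + (l - k)))"
      using assms by (intro Dk_eq) auto
    also have "(\<Prod>m<n. Q n X (m + 1) (m + 1 + (l - k))) = (\<Prod>m<n. Q n X (m + 1 + k) (m + 1 + k + (l - k)))"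
      using assms by (intro P_shift[symmetric]) auto
    also have "\<dots> = (\<Prod>m<n. E m)" using assms by (simp add: E_def)
    finally show ?thesis .
  qed
  have Fk: "Dk n X l = root n (\<Prod>m<n. F m)" unfolding F_def using assms by (intro Dk_eq) auto
  have Gk: "Dk n X (k - j) = root n (\<Prod>m<n. G m)"
  proof -
    have "Dk n X (k - j) = root n (\<Prod>m<n. Q n X (m + 1) (m + 1 + (k - j)))"
      using assms by (intro Dk_eq) auto
    also have "(\<Prod>m<n. Q n X (m + 1) (m + 1 + (k - j))) = (\<Prod>m<n. Q n X (m + 1 + j) (m + 1 + j + (k - j)))"
      using assms by (intro P_shift[symmetric]) auto
    also have "\<dots> = (\<Prod>m<n. G m)" using assms by (simp add: G_def)
    finally show ?thesis .
  qed
  have Cp: "C m > 0" for m unfolding C_def using assms by (intro qp) auto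
  have Ep: "E m > 0" for m unfolding E_def using assms by (intro qp) auto
  have Fp: "F m > 0" for m unfolding F_def using assms by (intro qp) auto
  have Gp: "G m > 0" for m unfolding G_def using assms by (intro qp) auto
  have pl: "A m * B m = C m * E m + F m * G m" for m
    unfolding A_def B_def C_def E_def F_def G_def by (rule pluecker)
  have "Dk n X j * Dk n X (l - k) + Dk n X l * Dk n X (k - j)
      = root n (\<Prod>m<n. C m * E m) + root n (\<Prod>m<n. F m * G m)"
    unfolding Ck Ek Fk Gk by (simp add: real_root_mult prod.distrib)
  also have "\<dots> \<le> root n (\<Prod>m<n. C m * E m + F m * G m)"
    by (rule geo_superadd[OF n]) (use Cp Ep Fp Gp in auto)
  also have "\<dots> = Dk n X k * Dk n X (l - j)"
    unfolding Ak Bk pl[symmetric] by (simp add: real_root_mult prod.distrib)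
  finally show ?thesis .
qed

end
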